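(* Let $\delta\in[1/3,1]$, $\alpha>0$ with $\alpha\delta<1$, $\eta_0^{2}=\frac{1+\alpha^{2}}{1+\delta^{2}}$, $0\le B_0\le\sqrt{1-\eta_0^2\delta^2}$, and $\widetilde{A_\ast}=\sqrt{1-(1+\delta^2)B_0^2}$. Define $\lambda_r,\lambda_i\ge0$ by $$2\lambda_r^{2}=\sqrt2\,\widetilde{A_\ast}+\varepsilon^{2}B_0^{2}(1+\delta^{2})^{2},\qquad 2\lambda_i^{2}=\sqrt2\,\widetilde{A_\ast}-\varepsilon^{2}B_0^{2}(1+\delta^{2})^{2}.$$ If $\alpha\ge\frac{10}{3}\varepsilon^2$ and $\varepsilon>0$ is small enough, then $$\lambda_r\lambda_i\ge\frac{\widetilde{A_\ast}}{2},\qquad \frac{\widetilde{A_\ast}^{1/2}}{2^{1/4}}\le\lambda_r\le2^{1/4}\widetilde{A_\ast}^{1/2},\qquad \frac{\widetilde{A_\ast}^{1/2}}{2^{5/4}}\le\lambda_i\le\frac{\widetilde{A_\ast}^{1/2}}{2^{1/4}},$$ while $\widetilde{A_\ast}$ varies from $1$ to $\alpha\delta$ as $B_0$ varies from $0$ to $\sqrt{1-\eta_0^2\delta^2}$.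
   Context: The numbers $\lambda_r\pm i\lambda_i$, $-\lambda_r\pm i\lambda_i$ are the nonzero roots of $\lambda^4-2\varepsilon^2B_0^2(1+\delta^2)^2\lambda^2+2\widetilde{A_\ast}^2=0$. *)

theory Defs
  imports Complex_Main
begin

definition Atil :: "real \<Rightarrow> real \<Rightarrow> real" where
  "Atil \<delta> B0 = sqrt (1 - (1 + \<delta>^2) * B0^2)"

end

theory Submission
  imports Defs
begin

lemma key:
  fixes \<epsilon> \<delta> \<alpha> \<eta>0 B0 :: real
  assumes "1/3 \<le> \<delta>" "\<delta> \<le> 1" "0 < \<alpha>" "\<alpha> * \<delta> < 1"
    "\<eta>0^2 = (1 + \<alpha>^2) / (1 + \<delta>^2)" "0 \<le> B0" "B0 \<le> sqrt (1 - \<eta>0^2 * \<delta>^2)"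
    "\<alpha> \<ge> 10/3 * \<epsilon>^2"
  shows "\<epsilon>^2 * B0^2 * (1 + \<delta>^2)^2 \<le> Atil \<delta> B0" "Atil \<delta> B0 \<ge> 0"
    "(1 + \<delta>^2) * B0^2 \<le> 1 - \<alpha>^2 * \<delta>^2"
proof -
  have p: "1 + \<delta>^2 > 0" by (simp add: add_pos_nonneg)
  have e: "1 - \<eta>0^2 * \<delta>^2 = (1 - \<alpha>^2*\<delta>^2)/(1+\<delta>^2)"
    using assms(5) p by (simp add: field_simps)
  have ad: "0 \<le> \<alpha>*\<delta>" using assms by simp
  have "\<alpha>^2*\<delta>^2 < 1" using ad assms(4)
    by (metis power_mult_distrib power_strict_mono power_one zero_less_numeral)
  hence nn: "0 \<le> 1 - \<eta>0^2 * \<delta>^2" unfolding e by (simp add: add_pos_pos)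
  have "B0^2 \<le> 1 - \<eta>0^2 * \<delta>^2" using assms(6,7) nn
    by (metis real_sqrt_pow2 power_mono)
  hence B: "(1 + \<delta>^2) * B0^2 \<le> 1 - \<alpha>^2 * \<delta>^2" unfolding e
    using p by (simp add: le_divide_eq algebra_simps)
  thus "(1 + \<delta>^2) * B0^2 \<le> 1 - \<alpha>^2 * \<delta>^2" .
  define A where "A = Atil \<delta> B0"
  have "0 \<le> \<alpha>^2 * \<delta>^2" by simp
  hence le1: "(1 + \<delta>^2) * B0^2 \<le> 1" using B by linarith
  have A2: "A^2 = 1 - (1 + \<delta>^2) * B0^2" unfolding A_def Atil_def using le1 by simp
  have A0: "A \<ge> 0" unfolding A_def Atil_def using le1 by simp
  thus "Atil \<delta> B0 \<ge> 0" by (simp add: A_def)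
  have "A^2 \<ge> \<alpha>^2*\<delta>^2" using A2 B by linarith
  hence "(\<alpha>*\<delta>)^2 \<le> A^2" by (simp add: power_mult_distrib)
  hence Aad: "\<alpha>*\<delta> \<le> A" using power2_le_imp_le[OF _ A0] by blast
  have "\<epsilon>^2 * B0^2 * (1 + \<delta>^2)^2 = \<epsilon>^2 * (1+\<delta>^2) * ((1+\<delta>^2)*B0^2)"
    by (simp only: power2_eq_square) (simp add: mult_ac)
  also have "\<dots> = \<epsilon>^2 * (1+\<delta>^2) * (1 - A^2)" using A2 by simp
  also have "\<dots> \<le> \<epsilon>^2 * (1+\<delta>^2)"
    by (rule mult_left_le) (simp_all add: p less_imp_le)
  also have "\<dots> \<le> \<epsilon>^2 * (10/3*\<delta>)"
  proof (rule mult_left_mono)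
    have "(3*\<delta>-1)*(3-\<delta>) \<ge> 0" using assms(1,2) by (intro mult_nonneg_nonneg) auto
    thus "1 + \<delta>\<^sup>2 \<le> 10 / 3 * \<delta>" by (simp add: algebra_simps power2_eq_square)
  qed simp
  also have "\<dots> = (10/3*\<epsilon>^2) * \<delta>" by simp
  also have "\<dots> \<le> \<alpha>*\<delta>" using assms(1,8) by (intro mult_right_mono) auto
  also have "\<dots> \<le> A" by (rule Aad)
  finally show "\<epsilon>^2 * B0^2 * (1 + \<delta>^2)^2 \<le> Atil \<delta> B0" by (simp add: A_def)
qed

theorem lemma3:
  shows "\<exists>\<epsilon>0>0. \<forall>\<epsilon> \<delta> \<alpha> \<eta>0 B0 lam_r lam_i :: real.
    0 < \<epsilon> \<and> \<epsilon> < \<epsilon>0 \<and>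
    1/3 \<le> \<delta> \<and> \<delta> \<le> 1 \<and> 0 < \<alpha> \<and> \<alpha> * \<delta> < 1 \<and>
    \<eta>0^2 = (1 + \<alpha>^2) / (1 + \<delta>^2) \<and>
    0 \<le> B0 \<and> B0 \<le> sqrt (1 - \<eta>0^2 * \<delta>^2) \<and>
    \<alpha> \<ge> 10/3 * \<epsilon>^2 \<and>
    0 \<le> lam_r \<and> 0 \<le> lam_i \<and>
    2 * lam_r^2 = sqrt 2 * Atil \<delta> B0 + \<epsilon>^2 * B0^2 * (1 + \<delta>^2)^2 \<and>
    2 * lam_i^2 = sqrt 2 * Atil \<delta> B0 - \<epsilon>^2 * B0^2 * (1 + \<delta>^2)^2
    \<longrightarrow>
    lam_r * lam_i \<ge> Atil \<delta> B0 / 2 \<and>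
    sqrt (Atil \<delta> B0) / 2 powr (1/4) \<le> lam_r \<and>
    lam_r \<le> 2 powr (1/4) * sqrt (Atil \<delta> B0) \<and>
    sqrt (Atil \<delta> B0) / 2 powr (5/4) \<le> lam_i \<and>
    lam_i \<le> sqrt (Atil \<delta> B0) / 2 powr (1/4) \<and>
    Atil \<delta> 0 = 1 \<and>
    Atil \<delta> (sqrt (1 - \<eta>0^2 * \<delta>^2)) = \<alpha> * \<delta> \<and>
    continuous_on {0 .. sqrt (1 - \<eta>0^2 * \<delta>^2)} (Atil \<delta>) \<and>
    (\<forall>b1 b2. 0 \<le> b1 \<and> b1 < b2 \<and> b2 \<le> sqrt (1 - \<eta>0^2 * \<delta>^2)
       \<longrightarrow> Atil \<delta> b2 < Atil \<delta> b1)"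
proof (intro exI[of _ 1] conjI allI impI)
  show "(0::real) < 1" by simp
next
  fix \<epsilon> \<delta> \<alpha> \<eta>0 B0 lam_r lam_i :: real
  assume H: "0 < \<epsilon> \<and> \<epsilon> < 1 \<and>
    1/3 \<le> \<delta> \<and> \<delta> \<le> 1 \<and> 0 < \<alpha> \<and> \<alpha> * \<delta> < 1 \<and>
    \<eta>0^2 = (1 + \<alpha>^2) / (1 + \<delta>^2) \<and>
    0 \<le> B0 \<and> B0 \<le> sqrt (1 - \<eta>0^2 * \<delta>^2) \<and>
    \<alpha> \<ge> 10/3 * \<epsilon>^2 \<and>
    0 \<le> lam_r \<and> 0 \<le> lam_i \<and>
    2 * lam_r^2 = sqrt 2 * Atil \<delta> B0 + \<epsilon>^2 * B0^2 * (1 + \<delta>^2)^2 \<and>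
    2 * lam_i^2 = sqrt 2 * Atil \<delta> B0 - \<epsilon>^2 * B0^2 * (1 + \<delta>^2)^2"
  define A where "A = Atil \<delta> B0"
  define c where "c = \<epsilon>^2 * B0^2 * (1 + \<delta>^2)^2"
  define s where "s = (2::real) powr (1/4)"
  have s0: "s > 0" by (simp add: s_def)
  have cA: "c \<le> A" "0 \<le> A" and B: "(1 + \<delta>^2) * B0^2 \<le> 1 - \<alpha>^2 * \<delta>^2"
    using key[of \<delta> \<alpha> \<eta>0 B0 \<epsilon>] H by (auto simp: A_def c_def)
  have c0: "0 \<le> c" unfolding c_def by simp
  have r2: "2 * lam_r^2 = sqrt 2 * A + c" and i2: "2 * lam_i^2 = sqrt 2 * A - c"
    and r0: "0 \<le> lam_r" and i0: "0 \<le> lam_i" using H by (auto simp: A_def c_def)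
  define t where "t = sqrt (2::real)"
  have tt: "t * t = 2" by (simp add: t_def)
  have t43: "4/3 \<le> t" unfolding t_def by (rule real_le_rsqrt) (simp add: power2_eq_square)
  have t1: "1 \<le> t" using t43 by simp
  have s2: "s^2 = t"
  proof -
    have "s^2 = 2 powr (1/4) * 2 powr (1/4)" by (simp add: s_def power2_eq_square)
    also have "\<dots> = 2 powr (1/2)" by (simp flip: powr_add)
    also have "\<dots> = t" by (simp add: powr_half_sqrt t_def)
    finally show ?thesis .
  qed
  have s5: "(2::real) powr (5/4) = 2 * s" unfolding s_def
    using powr_add[of "2::real" 1 "1/4"] by simp
  have r2': "2 * lam_r^2 = t * A + c" using r2 by (simp add: t_def)
  have i2': "2 * lam_i^2 = t * A - c" using i2 by (simp add: t_def)
  have sA: "(sqrt A)^2 = A" using cA by simp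
  have At1: "A \<le> t * A" using mult_right_mono[OF t1 cA(2)] by simp
  have At43: "4/3 * A \<le> t * A" using mult_right_mono[OF t43 cA(2)] by simp
  have Adt: "A / t = t * A / 2" using tt t1 by (simp add: field_simps)
  have Adt4: "A / (4*t) = t * A / 8" using tt t1 by (simp add: field_simps)
  show "lam_r * lam_i \<ge> Atil \<delta> B0 / 2"
  proof -
    have "(A/2)^2 \<le> (lam_r * lam_i)^2"
    proof -
      have "4*(lam_r*lam_i)^2 = (2*lam_r^2)*(2*lam_i^2)" by algebra
      also have "\<dots> = (t*A+c)*(t*A-c)" unfolding r2' i2' ..
      also have "\<dots> = (t*t)*A^2 - c^2" by algebra
      also have "\<dots> = 2*A^2 - c^2" using tt by simp
      finally have "4*(lam_r*lam_i)^2 = 2*A^2 - c^2" .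
      moreover have "c^2 \<le> A^2" using power_mono[OF cA(1) c0] .
      moreover have "(A/2)^2 = A^2/4" by (simp add: power_divide)
      ultimately show ?thesis by linarith
    qed
    hence "A/2 \<le> lam_r*lam_i" using mult_nonneg_nonneg[OF r0 i0] by (rule power2_le_imp_le)
    thus ?thesis by (simp only: A_def)
  qed
  show "sqrt (Atil \<delta> B0) / 2 powr (1/4) \<le> lam_r"
  proof -
    have "(sqrt A / s)^2 \<le> lam_r^2"
    proof -
      have "(sqrt A / s)^2 = A / t" by (simp add: power_divide sA s2)
      also have "\<dots> \<le> lam_r^2" using r2' c0 Adt by linarith
      finally show ?thesis .
    qed
    hence "sqrt A / s \<le> lam_r" using r0 by (rule power2_le_imp_le)
    thus ?thesis by (simp only: A_def s_def)
  qed
  show "lam_r \<le> 2 powr (1/4) * sqrt (Atil \<delta> B0)"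
  proof -
    have "lam_r^2 \<le> (s * sqrt A)^2"
    proof -
      have "(s * sqrt A)^2 = t * A" by (simp add: power_mult_distrib sA s2)
      moreover have "lam_r^2 \<le> t * A" using r2' cA At1 by linarith
      ultimately show ?thesis by simp
    qed
    hence "lam_r \<le> s * sqrt A" using mult_nonneg_nonneg[OF less_imp_le[OF s0] real_sqrt_ge_zero[OF cA(2)]] by (rule power2_le_imp_le)
    thus ?thesis by (simp only: A_def s_def)
  qed
  show "sqrt (Atil \<delta> B0) / 2 powr (5/4) \<le> lam_i"
  proof -
    have "(sqrt A / (2*s))^2 \<le> lam_i^2"
    proof -
      have "(sqrt A / (2*s))^2 = A / (2^2 * t)" by (simp only: power_divide power_mult_distrib sA s2)
      also have "\<dots> = A / (4 * t)" by simp
      also have "\<dots> \<le> lam_i^2" using i2' cA At43 Adt4 by linarith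
      finally show ?thesis .
    qed
    hence "sqrt A / (2*s) \<le> lam_i" using i0 by (rule power2_le_imp_le)
    moreover have "sqrt (Atil \<delta> B0) / 2 powr (5/4) = sqrt A / (2*s)" by (simp only: A_def s5)
    ultimately show ?thesis by simp
  qed
  show "lam_i \<le> sqrt (Atil \<delta> B0) / 2 powr (1/4)"
  proof -
    have "lam_i^2 \<le> (sqrt A / s)^2"
    proof -
      have "(sqrt A / s)^2 = A / t" by (simp add: power_divide sA s2)
      moreover have "lam_i^2 \<le> A / t" using i2' c0 Adt by linarith
      ultimately show ?thesis by simp
    qed
    hence "lam_i \<le> sqrt A / s" using divide_nonneg_pos[OF real_sqrt_ge_zero[OF cA(2)] s0] by (rule power2_le_imp_le)
    thus ?thesis by (simp only: A_def s_def)
  qed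
  show "Atil \<delta> 0 = 1" by (simp add: Atil_def)
  have p: "1 + \<delta>^2 > 0" by (simp add: add_pos_nonneg)
  have e: "1 - \<eta>0^2 * \<delta>^2 = (1 - \<alpha>^2*\<delta>^2)/(1+\<delta>^2)"
    using H p by (simp add: field_simps)
  have "0 \<le> sqrt (1 - \<eta>0^2 * \<delta>^2)" using H by linarith
  hence nn: "0 \<le> 1 - \<eta>0^2 * \<delta>^2" by simp
  show "Atil \<delta> (sqrt (1 - \<eta>0^2 * \<delta>^2)) = \<alpha> * \<delta>"
  proof -
    have "(sqrt (1 - \<eta>0^2 * \<delta>^2))^2 = (1 - \<alpha>^2*\<delta>^2)/(1+\<delta>^2)"
      using nn e by simp
    hence "1 - (1 + \<delta>^2) * (sqrt (1 - \<eta>0^2 * \<delta>^2))^2 = \<alpha>^2*\<delta>^2"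
      using p by simp
    also have "\<dots> = (\<alpha>*\<delta>)^2" by (simp add: power_mult_distrib)
    finally have "1 - (1 + \<delta>^2) * (sqrt (1 - \<eta>0^2 * \<delta>^2))^2 = (\<alpha>*\<delta>)^2" .
    moreover have "0 \<le> \<alpha>*\<delta>" using H by simp
    ultimately show ?thesis unfolding Atil_def by simp
  qed
  show "continuous_on {0 .. sqrt (1 - \<eta>0^2 * \<delta>^2)} (Atil \<delta>)"
    unfolding Atil_def by (intro continuous_intros)
  show "Atil \<delta> b2 < Atil \<delta> b1"
    if "0 \<le> b1 \<and> b1 < b2 \<and> b2 \<le> sqrt (1 - \<eta>0^2 * \<delta>^2)" for b1 b2 :: real
  proof -
    from that have "b1^2 < b2^2" by (intro power_strict_mono) auto
    hence "(1 + \<delta>^2) * b1^2 < (1 + \<delta>^2) * b2^2" using p by (rule mult_strict_left_mono)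
    hence "1 - (1 + \<delta>^2) * b2^2 < 1 - (1 + \<delta>^2) * b1^2" by linarith
    thus "Atil \<delta> b2 < Atil \<delta> b1" unfolding Atil_def by (rule real_sqrt_less_mono)
  qed
qed

end
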